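(* Let $X=\{x_j\mid j\in J\}$ be a set, $\tilde q$ a symbol not in $X$, $V$ the $\mathbf{k}$-vector space with basis $X\cup\{\tilde q\}$, $T(V)$ its tensor algebra, $I$ the two-sided ideal generated by $\{\tilde q\otimes\tilde q-\tilde q\}\cup\{\tilde q\otimes a\otimes\tilde q-\tilde q\otimes a\mid a\in T(V)\}$, $\hat A:=T(V)/I$, $\hat q:=\tilde q+I$, $\hat 1$ the identity of $\hat A$, and $\hat x_j:=x_j+I$. Then the set $$\hat S:=\{\hat 1,\ \hat q\}\cup\{\hat x_{j_1}\cdots\hat x_{j_m},\ \hat x_{j_1}\cdots\hat x_{j_t}\hat q\,\hat x_{j_{t+1}}\cdots\hat x_{j_m}\mid j_1,\dots,j_m\in J,\ m\ge1,\ 0\le t\le m\}$$ is a $\mathbf{k}$-basis of the vector space $(\hat A,\hat q)$.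
   Context: For an associative algebra $A$ with idempotent $q$, $(A,q):=\{x\in A\mid qxq=qx\}$ is the invariant algebra induced by $q$ (here $(\hat A,\hat q)=\hat A$ is the free invariant algebra generated by $X$). The indices $j_1,\dots,j_m$ are arbitrary (repetitions allowed). *)

theory Defs
  imports Main
begin

text \<open>Letters: None stands for the extra symbol q-tilde, Some j for x_j.  The tensor algebra T(V) of the
  vector space V with basis X \<union> {q-tilde} is the free associative algebra on these
  letters: finitely supported k-valued functions on words, with concatenation
  (convolution) product.\<close>

type_synonym 'j word = "'j option list"
type_synonym ('j, 'k) fa = "'j word \<Rightarrow> 'k"

definition FA :: "('j, 'k::zero) fa set" where
  "FA = {f. finite {w. f w \<noteq> 0}}"

definition fa_add :: "('j, 'k::plus) fa \<Rightarrow> ('j, 'k) fa \<Rightarrow> ('j, 'k) fa" where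
  "fa_add f g = (\<lambda>w. f w + g w)"

definition fa_diff :: "('j, 'k::minus) fa \<Rightarrow> ('j, 'k) fa \<Rightarrow> ('j, 'k) fa" where
  "fa_diff f g = (\<lambda>w. f w - g w)"

definition fa_mult :: "('j, 'k::semiring_0) fa \<Rightarrow> ('j, 'k) fa \<Rightarrow> ('j, 'k) fa" where
  "fa_mult f g = (\<lambda>w. \<Sum>i\<le>length w. f (take i w) * g (drop i w))"

definition mono :: "'j word \<Rightarrow> ('j, 'k::{zero,one}) fa" where
  "mono w = (\<lambda>v. if v = w then 1 else 0)"

definition qt :: "('j, 'k::{zero,one}) fa" where
  "qt = mono [None]"

inductive_set ideal_gen :: "('j, 'k::comm_ring_1) fa set \<Rightarrow> ('j, 'k) fa set"
  for R :: "('j, 'k) fa set" where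
  gen: "r \<in> R \<Longrightarrow> r \<in> ideal_gen R"
| zero: "(\<lambda>w. 0) \<in> ideal_gen R"
| add: "a \<in> ideal_gen R \<Longrightarrow> b \<in> ideal_gen R \<Longrightarrow> fa_add a b \<in> ideal_gen R"
| lmult: "a \<in> FA \<Longrightarrow> b \<in> ideal_gen R \<Longrightarrow> fa_mult a b \<in> ideal_gen R"
| rmult: "a \<in> FA \<Longrightarrow> b \<in> ideal_gen R \<Longrightarrow> fa_mult b a \<in> ideal_gen R"

definition Irel :: "('j, 'k::comm_ring_1) fa set" where
  "Irel = ideal_gen ({fa_diff (fa_mult qt qt) qt}
      \<union> {fa_diff (fa_mult (fa_mult qt a) qt) (fa_mult qt a) | a. a \<in> FA})"

text \<open>f + I lies in the invariant algebra (A-hat, q-hat), i.e. q f q - q f \<in> I.\<close>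
definition in_inv :: "('j, 'k::comm_ring_1) fa \<Rightarrow> bool" where
  "in_inv f \<longleftrightarrow> f \<in> FA \<and> fa_diff (fa_mult (fa_mult qt f) qt) (fa_mult qt f) \<in> Irel"

definition S_hat :: "'j word set" where
  "S_hat = {[], [None]}
     \<union> {map Some js | js. length js \<ge> 1}
     \<union> {map Some (take t js) @ [None] @ map Some (drop t js) | js t.
          length js \<ge> 1 \<and> t \<le> length js}"

end

theory Submission
  imports Defs
begin

definition pr :: "('j, 'k::comm_ring_1) fa \<Rightarrow> ('j word \<Rightarrow> 'k) \<Rightarrow> 'k" where
  "pr f g = (\<Sum>w\<in>{w. f w \<noteq> 0}. f w * g w)"

lemma pr_superset:
  assumes "finite W" "{w. f w \<noteq> 0} \<subseteq> W"
  shows "pr f g = (\<Sum>w\<in>W. f w * g w)"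
  unfolding pr_def by (rule sum.mono_neutral_left) (use assms in auto)

lemma FA_fin: "f \<in> FA \<Longrightarrow> finite {w. f w \<noteq> 0}"
  by (simp add: FA_def)

lemma pr_lin:
  assumes U: "finite U" and F: "\<forall>u\<in>U. f u \<in> FA"
  shows "pr (\<lambda>w. \<Sum>u\<in>U. c u * f u w) g = (\<Sum>u\<in>U. c u * pr (f u) g)"
proof -
  define W where "W = (\<Union>u\<in>U. {w. f u w \<noteq> 0})"
  have fW: "finite W" unfolding W_def using U F FA_fin by blast
  have s: "{w. (\<Sum>u\<in>U. c u * f u w) \<noteq> 0} \<subseteq> W"
  proof
    fix w assume "w \<in> {w. (\<Sum>u\<in>U. c u * f u w) \<noteq> 0}"
    then have "\<exists>u\<in>U. f u w \<noteq> 0" by (metis (mono_tags, lifting) mem_Collect_eq mult_zero_right sum.neutral)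
    then show "w \<in> W" unfolding W_def by auto
  qed
  have "pr (\<lambda>w. \<Sum>u\<in>U. c u * f u w) g = (\<Sum>w\<in>W. (\<Sum>u\<in>U. c u * f u w) * g w)"
    by (rule pr_superset[OF fW s])
  also have "\<dots> = (\<Sum>w\<in>W. \<Sum>u\<in>U. c u * (f u w * g w))"
    by (simp add: sum_distrib_right mult.assoc)
  also have "\<dots> = (\<Sum>u\<in>U. c u * (\<Sum>w\<in>W. f u w * g w))"
    by (subst sum.swap) (simp add: sum_distrib_left)
  also have "\<dots> = (\<Sum>u\<in>U. c u * pr (f u) g)"
  proof (rule sum.cong[OF refl])
    fix u assume "u \<in> U"
    then have "{w. f u w \<noteq> 0} \<subseteq> W" unfolding W_def by auto
    then show "c u * (\<Sum>w\<in>W. f u w * g w) = c u * pr (f u) g"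
      using pr_superset[OF fW] by metis
  qed
  finally show ?thesis .
qed

lemma mult_mono_left:
  fixes b :: "('j, 'k::comm_ring_1) fa"
  shows "fa_mult (mono u) b w = (if take (length u) w = u then b (drop (length u) w) else 0)"
proof -
  have e: "\<And>i. i \<in> {..length w} \<Longrightarrow> mono u (take i w) * b (drop i w)
     = (if i = length u then (if take (length u) w = u then b (drop (length u) w) else 0) else 0)"
  proof -
    fix i assume "i \<in> {..length w}"
    then have "(take i w = u) = (i = length u \<and> take (length u) w = u)" by auto
    then show "mono u (take i w) * b (drop i w)
     = (if i = length u then (if take (length u) w = u then b (drop (length u) w) else 0) else 0)"
      by (auto simp: mono_def)
  qed
  have "fa_mult (mono u) b w = (\<Sum>i\<in>{..length w}. (if i = length u then (if take (length u) w = u then b (drop (length u) w) else 0) else 0))"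
    unfolding fa_mult_def using e by (rule sum.cong[OF refl])
  also have "\<dots> = (if take (length u) w = u then b (drop (length u) w) else 0)"
    by (auto simp: sum.delta')
  finally show ?thesis .
qed

lemma mult_mono_right:
  fixes b :: "('j, 'k::comm_ring_1) fa"
  shows "fa_mult b (mono v) w = (if length v \<le> length w \<and> drop (length w - length v) w = v
      then b (take (length w - length v) w) else 0)"
proof -
  let ?R = "(if length v \<le> length w \<and> drop (length w - length v) w = v
      then b (take (length w - length v) w) else 0)"
  have e: "\<And>i. i \<in> {..length w} \<Longrightarrow> b (take i w) * mono v (drop i w)
     = (if i = length w - length v then ?R else 0)"
  proof -
    fix i assume "i \<in> {..length w}"
    then have "(drop i w = v) = (i = length w - length v \<and> length v \<le> length w \<and> drop (length w - length v) w = v)" by auto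
    then show "b (take i w) * mono v (drop i w) = (if i = length w - length v then ?R else 0)"
      by (auto simp: mono_def)
  qed
  have "fa_mult b (mono v) w = (\<Sum>i\<in>{..length w}. (if i = length w - length v then ?R else 0))"
    unfolding fa_mult_def using e by (rule sum.cong[OF refl])
  also have "\<dots> = ?R"
    by (auto simp: sum.delta')
  finally show ?thesis .
qed


lemma mono_FA: "mono w \<in> FA"
proof -
  have "{v. mono w v \<noteq> (0::'k::{zero,one})} \<subseteq> {w}" by (auto simp: mono_def)
  then show ?thesis unfolding FA_def by (auto intro: finite_subset)
qed

lemma pr_mono: "pr (mono w :: ('j,'k::field) fa) g = g w"
proof -
  have "pr (mono w :: ('j,'k) fa) g = (\<Sum>v\<in>{w}. mono w v * g v)"
    by (rule pr_superset) (auto simp: mono_def)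
  then show ?thesis by (simp add: mono_def)
qed

lemma pr_shift_left:
  fixes b :: "('j, 'k::comm_ring_1) fa"
  assumes "b \<in> FA"
  shows "pr (fa_mult (mono u) b) g = pr b (\<lambda>v. g (u @ v))"
proof -
  let ?S = "{v. b v \<noteq> 0}"
  have fS: "finite ?S" using assms FA_fin by blast
  have sub: "{w. fa_mult (mono u) b w \<noteq> 0} \<subseteq> (\<lambda>v. u @ v) ` ?S"
  proof
    fix w assume "w \<in> {w. fa_mult (mono u) b w \<noteq> 0}"
    then have "take (length u) w = u" "b (drop (length u) w) \<noteq> 0"
      by (auto simp: mult_mono_left split: if_splits)
    then show "w \<in> (\<lambda>v. u @ v) ` ?S"
      by (metis (mono_tags, lifting) append_take_drop_id image_eqI mem_Collect_eq)
  qed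
  have "pr (fa_mult (mono u) b) g = (\<Sum>w\<in>(\<lambda>v. u @ v) ` ?S. fa_mult (mono u) b w * g w)"
    by (rule pr_superset[OF _ sub]) (use fS in auto)
  also have "\<dots> = (\<Sum>v\<in>?S. fa_mult (mono u) b (u @ v) * g (u @ v))"
    by (subst sum.reindex) (auto simp: inj_on_def)
  also have "\<dots> = (\<Sum>v\<in>?S. b v * g (u @ v))"
    by (simp add: mult_mono_left)
  finally show ?thesis by (simp add: pr_def)
qed

lemma pr_shift_right:
  fixes b :: "('j, 'k::comm_ring_1) fa"
  assumes "b \<in> FA"
  shows "pr (fa_mult b (mono v)) g = pr b (\<lambda>u. g (u @ v))"
proof -
  let ?S = "{v. b v \<noteq> 0}"
  have fS: "finite ?S" using assms FA_fin by blast
  have sub: "{w. fa_mult b (mono v) w \<noteq> 0} \<subseteq> (\<lambda>u. u @ v) ` ?S"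
  proof
    fix w assume "w \<in> {w. fa_mult b (mono v) w \<noteq> 0}"
    then have "drop (length w - length v) w = v" "b (take (length w - length v) w) \<noteq> 0"
      by (auto simp: mult_mono_right split: if_splits)
    then show "w \<in> (\<lambda>u. u @ v) ` ?S"
      by (metis (mono_tags, lifting) append_take_drop_id image_eqI mem_Collect_eq)
  qed
  have "pr (fa_mult b (mono v)) g = (\<Sum>w\<in>(\<lambda>u. u @ v) ` ?S. fa_mult b (mono v) w * g w)"
    by (rule pr_superset[OF _ sub]) (use fS in auto)
  also have "\<dots> = (\<Sum>u\<in>?S. fa_mult b (mono v) (u @ v) * g (u @ v))"
    by (subst sum.reindex) (auto simp: inj_on_def)
  also have "\<dots> = (\<Sum>u\<in>?S. b u * g (u @ v))"
    by (simp add: mult_mono_right)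
  finally show ?thesis by (simp add: pr_def)
qed

lemma mult_FA:
  fixes a b :: "('j, 'k::comm_ring_1) fa"
  assumes "a \<in> FA" "b \<in> FA" shows "fa_mult a b \<in> FA"
proof -
  let ?T = "(\<lambda>(u,v). u @ v) ` ({u. a u \<noteq> 0} \<times> {v. b v \<noteq> 0})"
  have "finite ?T" using assms FA_fin by blast
  moreover have "{w. fa_mult a b w \<noteq> 0} \<subseteq> ?T"
  proof
    fix w assume "w \<in> {w. fa_mult a b w \<noteq> 0}"
    then obtain i where "a (take i w) * b (drop i w) \<noteq> 0"
      unfolding fa_mult_def by (metis (mono_tags, lifting) mem_Collect_eq sum.neutral)
    then have "a (take i w) \<noteq> 0" "b (drop i w) \<noteq> 0" by auto
    then show "w \<in> ?T"
      by (metis (mono_tags, lifting) append_take_drop_id case_prod_conv image_eqI mem_Collect_eq mem_Sigma_iff)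
  qed
  ultimately show ?thesis unfolding FA_def by (auto intro: finite_subset)
qed

lemma decomp:
  fixes a :: "('j, 'k::comm_ring_1) fa"
  assumes "a \<in> FA" shows "a = (\<lambda>w. \<Sum>u\<in>{u. a u \<noteq> 0}. a u * mono u w)"
proof
  fix w
  have "(\<Sum>u\<in>{u. a u \<noteq> 0}. a u * mono u w) = (\<Sum>u\<in>{u. a u \<noteq> 0}. if u = w then a u else 0)"
    by (rule sum.cong) (auto simp: mono_def)
  also have "\<dots> = a w" using FA_fin[OF assms] by (simp add: sum.delta)
  finally show "a w = (\<Sum>u\<in>{u. a u \<noteq> 0}. a u * mono u w)" by simp
qed

lemma mult_lin_left:
  fixes f :: "'u \<Rightarrow> ('j, 'k::comm_ring_1) fa"
  shows "fa_mult (\<lambda>w. \<Sum>u\<in>U. c u * f u w) b = (\<lambda>w. \<Sum>u\<in>U. c u * fa_mult (f u) b w)"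
  unfolding fa_mult_def
  by (rule ext) (simp add: sum_distrib_right sum_distrib_left mult.assoc sum.swap[of _ "{..length _}"])

lemma mult_lin_right:
  fixes f :: "'u \<Rightarrow> ('j, 'k::comm_ring_1) fa"
  shows "fa_mult b (\<lambda>w. \<Sum>u\<in>U. c u * f u w) = (\<lambda>w. \<Sum>u\<in>U. c u * fa_mult b (f u) w)"
  unfolding fa_mult_def
  by (rule ext) (simp add: sum_distrib_right sum_distrib_left mult.assoc mult.left_commute sum.swap[of _ "{..length _}"])

lemma add_FA: "f \<in> FA \<Longrightarrow> g \<in> FA \<Longrightarrow> fa_add f (g::('j,'k::comm_ring_1) fa) \<in> FA"
  unfolding FA_def fa_add_def
  by (rule CollectI, rule finite_subset[of _ "{w. f w \<noteq> 0} \<union> {w. g w \<noteq> 0}"]) auto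

lemma diff_FA: "f \<in> FA \<Longrightarrow> g \<in> FA \<Longrightarrow> fa_diff f (g::('j,'k::comm_ring_1) fa) \<in> FA"
  unfolding FA_def fa_diff_def
  by (rule CollectI, rule finite_subset[of _ "{w. f w \<noteq> 0} \<union> {w. g w \<noteq> 0}"]) auto

lemma pr_add:
  fixes f g :: "('j, 'k::comm_ring_1) fa"
  assumes "f \<in> FA" "g \<in> FA" shows "pr (fa_add f g) G = pr f G + pr g G"
proof -
  let ?W = "{w. f w \<noteq> 0} \<union> {w. g w \<noteq> 0}"
  have fW: "finite ?W" using assms FA_fin by blast
  have "pr (fa_add f g) G = (\<Sum>w\<in>?W. fa_add f g w * G w)"
    by (rule pr_superset[OF fW]) (auto simp: fa_add_def)
  moreover have "pr f G = (\<Sum>w\<in>?W. f w * G w)" by (rule pr_superset[OF fW]) auto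
  moreover have "pr g G = (\<Sum>w\<in>?W. g w * G w)" by (rule pr_superset[OF fW]) auto
  ultimately show ?thesis by (simp add: fa_add_def sum.distrib distrib_right)
qed

lemma pr_diff:
  fixes f g :: "('j, 'k::comm_ring_1) fa"
  assumes "f \<in> FA" "g \<in> FA" shows "pr (fa_diff f g) G = pr f G - pr g G"
proof -
  let ?W = "{w. f w \<noteq> 0} \<union> {w. g w \<noteq> 0}"
  have fW: "finite ?W" using assms FA_fin by blast
  have "pr (fa_diff f g) G = (\<Sum>w\<in>?W. fa_diff f g w * G w)"
    by (rule pr_superset[OF fW]) (auto simp: fa_diff_def)
  moreover have "pr f G = (\<Sum>w\<in>?W. f w * G w)" by (rule pr_superset[OF fW]) auto
  moreover have "pr g G = (\<Sum>w\<in>?W. g w * G w)" by (rule pr_superset[OF fW]) auto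
  ultimately show ?thesis by (simp add: fa_diff_def sum_subtractf left_diff_distrib)
qed

fun phi :: "'j word \<Rightarrow> 'j word" where
  "phi [] = []"
| "phi (Some j # w) = Some j # phi w"
| "phi (None # w) = None # filter (\<lambda>x. x \<noteq> None) w"

lemma phi_append:
  "phi (u @ v) = phi u @ (if None \<in> set u then filter (\<lambda>x. x \<noteq> None) v else phi v)"
  by (induction u rule: phi.induct) auto

lemma phi_filter: "filter (\<lambda>x. x \<noteq> None) (phi v) = filter (\<lambda>x. x \<noteq> None) v"
  by (induction v rule: phi.induct) auto

lemma phi_nonone: "None \<notin> set w \<Longrightarrow> phi w = w"
  by (induction w rule: phi.induct) auto

lemma phi_idem: "phi (phi v) = phi v"
proof (induction v rule: phi.induct)
  case (3 w)
  have "None \<notin> set (filter (\<lambda>x. x \<noteq> None) w)" by auto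
  then have "phi (filter (\<lambda>x. x \<noteq> None) w) = filter (\<lambda>x. x \<noteq> None) w"
    by (rule phi_nonone)
  then show ?case by simp
qed auto

lemma phi_set: "(None \<in> set (phi u)) = (None \<in> set u)"
  by (induction u rule: phi.induct) auto

lemma phi_left: "phi (u @ phi v) = phi (u @ v)"
  using phi_filter[of v] by (simp add: phi_append phi_idem)

lemma phi_right: "phi (phi u @ v) = phi (u @ v)"
  by (simp add: phi_append phi_set phi_idem)


definition Kset :: "('j, 'k::comm_ring_1) fa set" where
  "Kset = {f \<in> FA. \<forall>h. pr f (\<lambda>w. h (phi w)) = 0}"

lemma qt_FA: "qt \<in> FA" unfolding qt_def by (rule mono_FA)

lemma Irel_K: "(Irel :: ('j, 'k::field) fa set) \<subseteq> Kset"
proof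
  fix f :: "('j,'k) fa" assume "f \<in> Irel"
  then show "f \<in> Kset" unfolding Irel_def
  proof (induction rule: ideal_gen.induct)
    case (gen r)
    then show ?case
    proof
      assume r: "r \<in> {fa_diff (fa_mult qt qt) qt}"
      have "r \<in> FA" using r by (simp add: diff_FA mult_FA qt_FA)
      moreover have "pr r (\<lambda>w. h (phi w)) = 0" for h
        using r by (simp add: pr_diff mult_FA qt_FA, simp add: qt_def pr_shift_left mono_FA pr_mono)
      ultimately show ?thesis by (simp add: Kset_def)
    next
      assume "r \<in> {fa_diff (fa_mult (fa_mult qt a) qt) (fa_mult qt a) | a. a \<in> FA}"
      then obtain a where r: "r = fa_diff (fa_mult (fa_mult qt a) qt) (fa_mult qt a)" and a: "a \<in> FA"
        by blast
      have "r \<in> FA" using r a by (simp add: diff_FA mult_FA qt_FA)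
      moreover have "pr r (\<lambda>w. h (phi w)) = 0" for h
      proof -
        have "pr r (\<lambda>w. h (phi w)) = pr (fa_mult (fa_mult qt a) qt) (\<lambda>w. h (phi w))
            - pr (fa_mult qt a) (\<lambda>w. h (phi w))"
          using r a by (simp add: pr_diff mult_FA qt_FA)
        also have "\<dots> = 0"
          using a by (simp add: qt_def pr_shift_left pr_shift_right mult_FA mono_FA)
        finally show ?thesis .
      qed
      ultimately show ?thesis by (simp add: Kset_def)
    qed
  next
    case zero
    then show ?case by (simp add: Kset_def FA_def pr_def)
  next
    case (add a b)
    then show ?case by (simp add: Kset_def pr_add add_FA)
  next
    case (lmult a b)
    have bF: "b \<in> FA" using lmult by (simp add: Kset_def)
    have "fa_mult a b \<in> FA" using lmult bF by (simp add: mult_FA)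
    moreover have "pr (fa_mult a b) (\<lambda>w. h (phi w)) = 0" for h
    proof -
      let ?U = "{u. a u \<noteq> 0}"
      have fU: "finite ?U" using lmult FA_fin by blast
      have "fa_mult a b = fa_mult (\<lambda>w. \<Sum>u\<in>?U. a u * mono u w) b"
        using decomp[OF lmult(1)] by simp
      also have "\<dots> = (\<lambda>w. \<Sum>u\<in>?U. a u * fa_mult (mono u) b w)" by (rule mult_lin_left)
      finally have "pr (fa_mult a b) (\<lambda>w. h (phi w)) = (\<Sum>u\<in>?U. a u * pr (fa_mult (mono u) b) (\<lambda>w. h (phi w)))"
        using pr_lin[OF fU, of "\<lambda>u. fa_mult (mono u) b"] bF by (simp add: mult_FA mono_FA)
      also have "\<dots> = (\<Sum>u\<in>?U. a u * pr b (\<lambda>v. (\<lambda>x. h (phi (u @ x))) (phi v)))"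
        using bF by (simp add: pr_shift_left phi_left)
      also have "\<dots> = 0"
      proof (rule sum.neutral, rule ballI)
        fix u
        have "\<forall>h. pr b (\<lambda>w. h (phi w)) = 0" using lmult(3) by (simp add: Kset_def)
        then have "pr b (\<lambda>v. (\<lambda>x. h (phi (u @ x))) (phi v)) = 0" by (rule spec)
        then show "a u * pr b (\<lambda>v. (\<lambda>x. h (phi (u @ x))) (phi v)) = 0" by simp
      qed
      finally show ?thesis .
    qed
    ultimately show ?case by (simp add: Kset_def)
  next
    case (rmult a b)
    have bF: "b \<in> FA" using rmult by (simp add: Kset_def)
    have "fa_mult b a \<in> FA" using rmult bF by (simp add: mult_FA)
    moreover have "pr (fa_mult b a) (\<lambda>w. h (phi w)) = 0" for h
    proof -
      let ?U = "{u. a u \<noteq> 0}"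
      have fU: "finite ?U" using rmult FA_fin by blast
      have "fa_mult b a = fa_mult b (\<lambda>w. \<Sum>u\<in>?U. a u * mono u w)"
        using decomp[OF rmult(1)] by simp
      also have "\<dots> = (\<lambda>w. \<Sum>u\<in>?U. a u * fa_mult b (mono u) w)" by (rule mult_lin_right)
      finally have "pr (fa_mult b a) (\<lambda>w. h (phi w)) = (\<Sum>u\<in>?U. a u * pr (fa_mult b (mono u)) (\<lambda>w. h (phi w)))"
        using pr_lin[OF fU, of "\<lambda>u. fa_mult b (mono u)"] bF by (simp add: mult_FA mono_FA)
      also have "\<dots> = (\<Sum>u\<in>?U. a u * pr b (\<lambda>v. (\<lambda>x. h (phi (x @ u))) (phi v)))"
        using bF by (simp add: pr_shift_right phi_right)
      also have "\<dots> = 0"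
      proof (rule sum.neutral, rule ballI)
        fix u
        have "\<forall>h. pr b (\<lambda>w. h (phi w)) = 0" using rmult(3) by (simp add: Kset_def)
        then have "pr b (\<lambda>v. (\<lambda>x. h (phi (x @ u))) (phi v)) = 0" by (rule spec)
        then show "a u * pr b (\<lambda>v. (\<lambda>x. h (phi (x @ u))) (phi v)) = 0" by simp
      qed
      finally show ?thesis .
    qed
    ultimately show ?case by (simp add: Kset_def)
  qed
qed


lemma Irel_add: "a \<in> Irel \<Longrightarrow> b \<in> Irel \<Longrightarrow> fa_add a b \<in> (Irel :: ('j,'k::comm_ring_1) fa set)"
  unfolding Irel_def by (rule ideal_gen.add)
lemma Irel_lmult: "a \<in> FA \<Longrightarrow> b \<in> Irel \<Longrightarrow> fa_mult a b \<in> (Irel :: ('j,'k::comm_ring_1) fa set)"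
  unfolding Irel_def by (rule ideal_gen.lmult)
lemma Irel_rmult: "a \<in> FA \<Longrightarrow> b \<in> Irel \<Longrightarrow> fa_mult b a \<in> (Irel :: ('j,'k::comm_ring_1) fa set)"
  unfolding Irel_def by (rule ideal_gen.rmult)
lemma Irel_zero: "(\<lambda>w. 0) \<in> (Irel :: ('j,'k::comm_ring_1) fa set)"
  unfolding Irel_def by (rule ideal_gen.zero)
lemma Irel_gen: "a \<in> FA \<Longrightarrow> fa_diff (fa_mult (fa_mult qt a) qt) (fa_mult qt a) \<in> (Irel :: ('j,'k::comm_ring_1) fa set)"
  unfolding Irel_def by (rule ideal_gen.gen) blast

abbreviation Rel :: "'j word \<Rightarrow> 'j word \<Rightarrow> ('j,'k::comm_ring_1) fa set \<Rightarrow> bool" where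
  "Rel w w' I \<equiv> fa_diff (mono w) (mono w') \<in> I"

lemma Rel_refl: "Rel w w (Irel :: ('j,'k::comm_ring_1) fa set)"
  unfolding fa_diff_def using Irel_zero by simp

lemma Rel_trans: "Rel a b (Irel :: ('j,'k::comm_ring_1) fa set) \<Longrightarrow> Rel b c (Irel :: ('j,'k) fa set) \<Longrightarrow> Rel a c (Irel :: ('j,'k) fa set)"
proof -
  assume "fa_diff (mono a) (mono b) \<in> (Irel :: ('j,'k) fa set)" "fa_diff (mono b) (mono c) \<in> (Irel :: ('j,'k) fa set)"
  then have "fa_add (fa_diff (mono a) (mono b)) (fa_diff (mono b) (mono c)) \<in> (Irel :: ('j,'k) fa set)"
    by (rule Irel_add)
  moreover have "fa_add (fa_diff (mono a) (mono b)) (fa_diff (mono b) (mono c)) = (fa_diff (mono a) (mono c) :: ('j,'k) fa)"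
    by (rule ext) (simp add: fa_add_def fa_diff_def)
  ultimately show "fa_diff (mono a) (mono c) \<in> (Irel :: ('j,'k) fa set)" by simp
qed

lemma mono_mult: "fa_mult (mono u) (mono v) = (mono (u @ v) :: ('j,'k::comm_ring_1) fa)"
proof
  fix w
  have "(w = u @ v) = (take (length u) w = u \<and> drop (length u) w = v)"
    by (metis append_eq_conv_conj)
  then show "fa_mult (mono u) (mono v) w = (mono (u @ v) :: ('j,'k) fa) w"
    unfolding mult_mono_left by (auto simp: mono_def)
qed

lemma mult_diff_left: "fa_mult (fa_diff a b) c = fa_diff (fa_mult a c) (fa_mult b (c::('j,'k::comm_ring_1) fa))"
  unfolding fa_mult_def fa_diff_def by (rule ext) (simp add: left_diff_distrib sum_subtractf)

lemma mult_diff_right: "fa_mult c (fa_diff a b) = fa_diff (fa_mult c a) (fa_mult c (b::('j,'k::comm_ring_1) fa))"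
  unfolding fa_mult_def fa_diff_def by (rule ext) (simp add: right_diff_distrib sum_subtractf)

lemma Rel_ctx: "Rel w w' (Irel :: ('j,'k::comm_ring_1) fa set) \<Longrightarrow> Rel (u @ w @ v) (u @ w' @ v) (Irel :: ('j,'k) fa set)"
proof -
  assume "fa_diff (mono w) (mono w') \<in> (Irel :: ('j,'k) fa set)"
  then have "fa_mult (mono u) (fa_mult (fa_diff (mono w) (mono w')) (mono v)) \<in> (Irel :: ('j,'k) fa set)"
    by (intro Irel_lmult Irel_rmult mono_FA)
  then show "fa_diff (mono (u @ w @ v)) (mono (u @ w' @ v)) \<in> (Irel :: ('j,'k) fa set)"
    by (simp add: mult_diff_left mult_diff_right mono_mult)
qed

lemma Rel_basic: "Rel (None # a @ [None]) (None # a) (Irel :: ('j,'k::comm_ring_1) fa set)"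
proof -
  have "fa_diff (fa_mult (fa_mult qt (mono a)) qt) (fa_mult qt (mono a)) \<in> (Irel :: ('j,'k) fa set)"
    by (rule Irel_gen[OF mono_FA])
  then show "fa_diff (mono (None # a @ [None])) (mono (None # a)) \<in> (Irel :: ('j,'k) fa set)"
    by (simp add: qt_def mono_mult)
qed

lemma Rel_remove: "Rel (u @ None # a @ None # b) (u @ None # a @ b) (Irel :: ('j,'k::comm_ring_1) fa set)"
  using Rel_ctx[OF Rel_basic[of a], of u b] by simp

lemma Rel_main: "None \<in> set p \<Longrightarrow> Rel (p @ v) (p @ filter (\<lambda>x. x \<noteq> None) v) (Irel :: ('j,'k::comm_ring_1) fa set)"
proof (induction v arbitrary: p)
  case Nil then show ?case by (simp add: Rel_refl)
next
  case (Cons x v)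
  show ?case
  proof (cases x)
    case None
    obtain u a where p: "p = u @ None # a" using Cons.prems split_list by metis
    have "Rel (p @ x # v) (p @ v) (Irel :: ('j,'k) fa set)" using Rel_remove[of u a v] p None by simp
    moreover have "Rel (p @ v) (p @ filter (\<lambda>x. x \<noteq> None) v) (Irel :: ('j,'k) fa set)" using Cons by blast
    ultimately show ?thesis using None by (auto intro: Rel_trans)
  next
    case (Some j)
    have "Rel ((p @ [x]) @ v) ((p @ [x]) @ filter (\<lambda>x. x \<noteq> None) v) (Irel :: ('j,'k) fa set)"
      using Cons.IH[of "p @ [x]"] Cons.prems by simp
    then show ?thesis using Some by simp
  qed
qed

lemma Rel_phi: "Rel w (phi w) (Irel :: ('j,'k::comm_ring_1) fa set)"
proof (cases "None \<in> set w")
  case True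
  then obtain u v where w: "w = u @ None # v" "None \<notin> set u" using split_list_first by metis
  have "phi w = u @ None # filter (\<lambda>x. x \<noteq> None) v"
    using w by (simp add: phi_append phi_nonone)
  moreover have "Rel ((u @ [None]) @ v) ((u @ [None]) @ filter (\<lambda>x. x \<noteq> None) v) (Irel :: ('j,'k) fa set)"
    by (rule Rel_main) simp
  ultimately show ?thesis using w by simp
next
  case False
  then show ?thesis by (simp add: phi_nonone Rel_refl)
qed

lemma no_none_map: "None \<notin> set u \<Longrightarrow> u = map Some (map the u)"
  by (induction u) auto

lemma phi_S: "phi w \<in> S_hat"
proof (cases "None \<in> set w")
  case True
  then obtain u v where w: "w = u @ None # v" "None \<notin> set u" using split_list_first by metis
  have ph: "phi w = u @ None # filter (\<lambda>x. x \<noteq> None) v"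
    using w by (simp add: phi_append phi_nonone)
  define a where "a = map the u"
  define b where "b = map the (filter (\<lambda>x. x \<noteq> None) v)"
  have ua: "u = map Some a" unfolding a_def using w(2) by (rule no_none_map)
  have vb: "filter (\<lambda>x. x \<noteq> None) v = map Some b" unfolding b_def by (rule no_none_map) simp
  show ?thesis
  proof (cases "a @ b = []")
    case True
    then show ?thesis using ph ua vb by (simp add: S_hat_def)
  next
    case False
    then have "phi w = map Some (take (length a) (a @ b)) @ [None] @ map Some (drop (length a) (a @ b))
       \<and> length (a @ b) \<ge> 1 \<and> length a \<le> length (a @ b)"
      using ph ua vb by (simp add: Suc_le_eq)
    then show ?thesis unfolding S_hat_def by blast
  qed
next
  case False
  then have ph: "phi w = map Some (map the w)" using phi_nonone[OF False] no_none_map[OF False] by metis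
  show ?thesis
  proof (cases "w = []")
    case True then show ?thesis by (simp add: S_hat_def)
  next
    case False
    then have "phi w = map Some (map the w) \<and> length (map the w) \<ge> 1" using ph by (simp add: Suc_le_eq)
    then show ?thesis unfolding S_hat_def by blast
  qed
qed

lemma S_phi: "w \<in> S_hat \<Longrightarrow> phi w = w"
  unfolding S_hat_def
  by (auto simp: phi_nonone phi_append filter_map o_def)


lemma mult_scal_left: "fa_mult (\<lambda>w. c * a w) b = (\<lambda>w. c * fa_mult a (b::('j,'k::comm_ring_1) fa) w)"
  unfolding fa_mult_def by (rule ext) (simp add: sum_distrib_left mult.assoc)

lemma scal_FA: "(\<lambda>w. c * mono [] w) \<in> (FA :: ('j,'k::comm_ring_1) fa set)"
proof -
  have "{w. (c * mono [] w :: 'k) \<noteq> 0} \<subseteq> {[]}" by (auto simp: mono_def)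
  then show ?thesis unfolding FA_def by (auto intro: finite_subset)
qed

lemma Irel_scal: "y \<in> Irel \<Longrightarrow> (\<lambda>w. c * y w) \<in> (Irel :: ('j,'k::comm_ring_1) fa set)"
proof -
  assume y: "y \<in> Irel"
  have "fa_mult (\<lambda>w. c * mono [] w) y \<in> (Irel :: ('j,'k) fa set)" by (rule Irel_lmult[OF scal_FA y])
  moreover have "fa_mult (\<lambda>w. c * mono [] w) y = (\<lambda>w. c * y w)"
    by (simp add: mult_scal_left mult_mono_left)
  ultimately show ?thesis by simp
qed

lemma Irel_sum:
  assumes "finite S" "\<forall>w\<in>S. x w \<in> Irel"
  shows "(\<lambda>v. \<Sum>w\<in>S. c w * x w v) \<in> (Irel :: ('j,'k::comm_ring_1) fa set)"
  using assms
proof (induction S rule: finite_induct)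
  case empty then show ?case using Irel_zero by simp
next
  case (insert a S)
  have "fa_add (\<lambda>v. c a * x a v) (\<lambda>v. \<Sum>w\<in>S. c w * x w v) \<in> (Irel :: ('j,'k) fa set)"
    using insert by (intro Irel_add Irel_scal) auto
  moreover have "fa_add (\<lambda>v. c a * x a v) (\<lambda>v. \<Sum>w\<in>S. c w * x w v) = (\<lambda>v. \<Sum>w\<in>insert a S. c w * x w v)"
    using insert by (simp add: fa_add_def)
  ultimately show ?case by simp
qed

lemma span:
  fixes f :: "('j,'k::comm_ring_1) fa"
  assumes fF: "f \<in> FA"
  shows "\<exists>(F :: 'j word set) (c :: 'j word \<Rightarrow> 'k). finite F \<and> F \<subseteq> S_hat \<and>
             fa_diff f (\<lambda>v. \<Sum>w\<in>F. c w * mono w v) \<in> Irel"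
proof -
  let ?S = "{w. f w \<noteq> 0}"
  have fS: "finite ?S" using FA_fin[OF fF] .
  define c where "c y = (\<Sum>w\<in>{w \<in> ?S. phi w = y}. f w)" for y
  have eq: "fa_diff f (\<lambda>v. \<Sum>y\<in>phi ` ?S. c y * mono y v)
      = (\<lambda>v. \<Sum>w\<in>?S. f w * fa_diff (mono w) (mono (phi w)) v)"
  proof
    fix v
    have "(\<Sum>y\<in>phi ` ?S. c y * mono y v) = (\<Sum>y\<in>phi ` ?S. \<Sum>w\<in>{w \<in> ?S. phi w = y}. f w * mono (phi w) v)"
      unfolding c_def sum_distrib_right by (rule sum.cong) auto
    also have "\<dots> = (\<Sum>w\<in>?S. f w * mono (phi w) v)"
      by (rule sum.image_gen[symmetric, OF fS])
    finally have a: "(\<Sum>y\<in>phi ` ?S. c y * mono y v) = (\<Sum>w\<in>?S. f w * mono (phi w) v)" .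
    have b: "f v = (\<Sum>w\<in>?S. f w * mono w v)" using decomp[OF fF] by metis
    show "fa_diff f (\<lambda>v. \<Sum>y\<in>phi ` ?S. c y * mono y v) v
      = (\<Sum>w\<in>?S. f w * fa_diff (mono w) (mono (phi w)) v)"
      unfolding fa_diff_def a by (subst b) (simp add: right_diff_distrib sum_subtractf)
  qed
  have "(\<lambda>v. \<Sum>w\<in>?S. f w * fa_diff (mono w) (mono (phi w)) v) \<in> Irel"
    by (rule Irel_sum[OF fS]) (simp add: Rel_phi)
  then have "fa_diff f (\<lambda>v. \<Sum>y\<in>phi ` ?S. c y * mono y v) \<in> Irel" using eq by simp
  moreover have "phi ` ?S \<subseteq> S_hat" using phi_S by blast
  moreover have "finite (phi ` ?S)" using fS by simp
  ultimately show ?thesis by blast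
qed

theorem proposition2p2:
  shows "(\<forall>w\<in>S_hat. in_inv (mono w :: ('j, 'k::field) fa))
    \<and> (\<forall>(F :: 'j word set) (c :: 'j word \<Rightarrow> 'k). finite F \<longrightarrow> F \<subseteq> S_hat \<longrightarrow>
          (\<lambda>v. \<Sum>w\<in>F. c w * mono w v) \<in> Irel \<longrightarrow> (\<forall>w\<in>F. c w = 0))
    \<and> (\<forall>f :: ('j, 'k) fa. in_inv f \<longrightarrow>
          (\<exists>(F :: 'j word set) (c :: 'j word \<Rightarrow> 'k). finite F \<and> F \<subseteq> S_hat \<and>
             fa_diff f (\<lambda>v. \<Sum>w\<in>F. c w * mono w v) \<in> Irel))"
proof (intro conjI ballI allI impI)
  fix w :: "'j word"
  show "in_inv (mono w :: ('j, 'k::field) fa)"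
    unfolding in_inv_def using mono_FA Irel_gen[OF mono_FA] by blast
next
  fix F :: "'j word set" and c :: "'j word \<Rightarrow> 'k" and w0
  assume fF: "finite F" and FS: "F \<subseteq> S_hat" and I: "(\<lambda>v. \<Sum>w\<in>F. c w * mono w v) \<in> Irel"
    and w0: "w0 \<in> F"
  have "(\<lambda>v. \<Sum>w\<in>F. c w * mono w v) \<in> Kset" using I Irel_K by blast
  then have "\<forall>h. pr (\<lambda>v. \<Sum>w\<in>F. c w * (mono w :: ('j,'k) fa) v) (\<lambda>x. h (phi x)) = 0"
    unfolding Kset_def by blast
  then have "pr (\<lambda>v. \<Sum>w\<in>F. c w * (mono w :: ('j,'k) fa) v) (\<lambda>x. (\<lambda>y. if y = w0 then 1 else 0) (phi x)) = 0"
    by (rule spec)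
  moreover have "pr (\<lambda>v. \<Sum>w\<in>F. c w * (mono w :: ('j,'k) fa) v) (\<lambda>x. (\<lambda>y. if y = w0 then 1 else 0) (phi x))
     = (\<Sum>w\<in>F. c w * (if phi w = w0 then 1 else 0))"
  proof -
    have "pr (\<lambda>v. \<Sum>w\<in>F. c w * (mono w :: ('j,'k) fa) v) (\<lambda>x. (\<lambda>y. if y = w0 then 1 else 0) (phi x))
      = (\<Sum>w\<in>F. c w * pr (mono w :: ('j,'k) fa) (\<lambda>x. (\<lambda>y. if y = w0 then 1 else 0) (phi x)))"
      by (rule pr_lin[OF fF]) (simp add: mono_FA)
    then show ?thesis by (simp add: pr_mono)
  qed
  moreover have "(\<Sum>w\<in>F. c w * (if phi w = w0 then 1 else 0)) = (\<Sum>w\<in>F. if w = w0 then c w else 0)"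
    using FS S_phi by (intro sum.cong) auto
  moreover have "\<dots> = c w0" using fF w0 by (simp add: sum.delta')
  ultimately show "c w0 = 0" by simp
next
  fix f :: "('j,'k) fa"
  assume "in_inv f"
  then have "f \<in> FA" by (simp add: in_inv_def)
  then show "\<exists>(F :: 'j word set) (c :: 'j word \<Rightarrow> 'k). finite F \<and> F \<subseteq> S_hat \<and>
             fa_diff f (\<lambda>v. \<Sum>w\<in>F. c w * mono w v) \<in> Irel" by (rule span)
qed

end
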